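(* Let $n\ge2$ and let $\sum_{l=0}^\infty a_lu^l$ be a power series in the polar $n$-complex variable $u$ with polar $n$-complex coefficients $a_l=\sum_{p=0}^{n-1}h_pa_{lp}$. Put $A_{l+}=\sum_pa_{lp}$, $A_{lk}=\sum_pa_{lp}\cos(2\pi kp/n)$, $\tilde A_{lk}=\sum_pa_{lp}\sin(2\pi kp/n)$ for $k=1,\dots,\lfloor(n-1)/2\rfloor$, and for even $n$, $A_{l-}=\sum_p(-1)^pa_{lp}$. Suppose these quantities are nonzero for all large $l$ and that the limits $$c_+=\lim_{l\to\infty}\frac{|A_{l+}|}{|A_{l+1,+}|},\quad c_-=\lim_{l\to\infty}\frac{|A_{l-}|}{|A_{l+1,-}|}\ (n\text{ even}),\quad c_k=\lim_{l\to\infty}\frac{(A_{lk}^2+\tilde A_{lk}^2)^{1/2}}{(A_{l+1,k}^2+\tilde A_{l+1,k}^2)^{1/2}}$$ exist in $[0,\infty]$. Then the series converges absolutely (i.e. each of its $n$ real component series converges absolutely) at every $u$ with $|v_+|<c_+$, $|v_-|<c_-$ (for even $n$) and $\rho_k<c_k$ for all $k=1,\dots,\lfloor(n-1)/2\rfloor$.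
   Context: Polar $n$-complex numbers: $u=x_0+h_1x_1+\cdots+h_{n-1}x_{n-1}$, $x_j\in\mathbb{R}$, $h_0=1$, componentwise addition, bilinear multiplication $h_jh_k=h_{(j+k)\bmod n}$. For $u$: $v_+=\sum_px_p$; for even $n$, $v_-=\sum_p(-1)^px_p$; $v_k=\sum_px_p\cos(2\pi kp/n)$, $\tilde v_k=\sum_px_p\sin(2\pi kp/n)$, $\rho_k=\sqrt{v_k^2+\tilde v_k^2}$ for $k=1,\dots,\lfloor(n-1)/2\rfloor$. *)

theory Defs
  imports Complex_Main "HOL-Library.Extended_Real"
begin

text \<open>A polar n-complex number x_0 + h_1 x_1 + ... + h_(n-1) x_(n-1) is represented by
  its component function x :: nat => real; only the values at indices p < n matter.\<close>

definition pc_mult :: "nat \<Rightarrow> (nat \<Rightarrow> real) \<Rightarrow> (nat \<Rightarrow> real) \<Rightarrow> (nat \<Rightarrow> real)" where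
  "pc_mult n x y = (\<lambda>j. \<Sum>p<n. \<Sum>q<n. if (p + q) mod n = j then x p * y q else 0)"

definition pc_one :: "nat \<Rightarrow> real" where
  "pc_one = (\<lambda>j. if j = 0 then 1 else 0)"

primrec pc_pow :: "nat \<Rightarrow> (nat \<Rightarrow> real) \<Rightarrow> nat \<Rightarrow> (nat \<Rightarrow> real)" where
  "pc_pow n u 0 = pc_one"
| "pc_pow n u (Suc l) = pc_mult n (pc_pow n u l) u"

definition v_plus :: "nat \<Rightarrow> (nat \<Rightarrow> real) \<Rightarrow> real" where
  "v_plus n x = (\<Sum>p<n. x p)"

definition v_minus :: "nat \<Rightarrow> (nat \<Rightarrow> real) \<Rightarrow> real" where
  "v_minus n x = (\<Sum>p<n. (-1) ^ p * x p)"

definition v_cos :: "nat \<Rightarrow> (nat \<Rightarrow> real) \<Rightarrow> nat \<Rightarrow> real" where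
  "v_cos n x k = (\<Sum>p<n. x p * cos (2 * pi * real k * real p / real n))"

definition v_sin :: "nat \<Rightarrow> (nat \<Rightarrow> real) \<Rightarrow> nat \<Rightarrow> real" where
  "v_sin n x k = (\<Sum>p<n. x p * sin (2 * pi * real k * real p / real n))"

definition v_rho :: "nat \<Rightarrow> (nat \<Rightarrow> real) \<Rightarrow> nat \<Rightarrow> real" where
  "v_rho n x k = sqrt ((v_cos n x k)\<^sup>2 + (v_sin n x k)\<^sup>2)"

end

theory Submission
  imports Defs
begin

lemma ratio_summ:
  fixes f :: "nat \<Rightarrow> real" and r :: real and c :: ereal
  assumes lim: "((\<lambda>l. ereal (f l / f (Suc l))) \<longlongrightarrow> c) sequentially"
    and f0: "\<And>l. f l \<ge> 0" and r0: "0 \<le> r" and rc: "ereal r < c"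
  shows "summable (\<lambda>l. f l * r ^ l)"
proof -
  obtain q where rq: "ereal r < ereal q" and qc: "ereal q < c" using ereal_dense2[OF rc] by blast
  have q0: "q > 0" using rq r0 by simp
  have rq': "r < q" using rq by simp
  have "eventually (\<lambda>l. ereal q < ereal (f l / f (Suc l))) sequentially"
    using order_tendstoD(1)[OF lim qc] .
  then obtain N where N: "\<And>l. l \<ge> N \<Longrightarrow> q < f l / f (Suc l)"
    unfolding eventually_sequentially by auto
  show ?thesis
  proof (rule summable_ratio_test[of "r / q" N])
    show "r / q < 1" using rq' q0 by simp
    fix l assume l: "l \<ge> N"
      have h: "q < f l / f (Suc l)" using N[OF l] .
      have fs: "f (Suc l) > 0"
      proof (rule ccontr)
        assume "\<not> f (Suc l) > 0"
        then have "f (Suc l) = 0" using f0[of "Suc l"] by simp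
        then show False using h q0 by simp
      qed
      have "q * f (Suc l) < f l" using h fs by (simp add: field_simps)
      then have "f (Suc l) \<le> f l / q" using q0 by (simp add: field_simps)
      then have "f (Suc l) * r ^ Suc l \<le> f l / q * r ^ Suc l"
        using r0 by (intro mult_right_mono) auto
      also have "\<dots> = r / q * (f l * r ^ l)" by (simp add: field_simps)
      finally show "norm (f (Suc l) * r ^ Suc l) \<le> r / q * norm (f l * r ^ l)"
        using f0[of l] f0[of "Suc l"] r0 by simp
  qed
qed

definition om :: "nat \<Rightarrow> complex" where "om n = cis (2 * pi / real n)"

definition chi :: "nat \<Rightarrow> (nat \<Rightarrow> real) \<Rightarrow> nat \<Rightarrow> complex" where
  "chi n x k = (\<Sum>p<n. complex_of_real (x p) * om n ^ (k * p))"

lemma om_pow_n: "n > 0 \<Longrightarrow> om n ^ n = 1"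
  unfolding om_def DeMoivre by simp

lemma om_pow_mod: assumes "n > 0" shows "om n ^ (k * m) = om n ^ (k * (m mod n))"
proof -
  have e: "k * m = n * (k * (m div n)) + k * (m mod n)"
  proof -
    have "m = n * (m div n) + m mod n" by simp
    then have "k * m = k * (n * (m div n) + m mod n)" by (rule arg_cong)
    then show ?thesis by (simp only: distrib_left mult.left_commute)
  qed
  have "om n ^ (k * m) = (om n ^ n) ^ (k * (m div n)) * om n ^ (k * (m mod n))"
    by (subst e) (simp add: power_add power_mult)
  then show ?thesis using om_pow_n[OF assms] by simp
qed

lemma chi_mult: assumes n: "n > 0"
  shows "chi n (pc_mult n x y) k = chi n x k * chi n y k"
proof -
  have "chi n (pc_mult n x y) k =
     (\<Sum>j<n. \<Sum>p<n. \<Sum>q<n. complex_of_real (if (p + q) mod n = j then x p * y q else 0) * om n ^ (k * j))"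
    unfolding chi_def pc_mult_def by (simp only: sum_distrib_right of_real_sum)
  also have "\<dots> = (\<Sum>p<n. \<Sum>q<n. \<Sum>j<n. complex_of_real (if (p + q) mod n = j then x p * y q else 0) * om n ^ (k * j))"
    apply (rule trans[OF sum.swap])
    apply (rule sum.cong[OF refl])
    apply (rule sum.swap)
    done
  also have "\<dots> = (\<Sum>p<n. \<Sum>q<n. complex_of_real (x p * y q) * om n ^ (k * ((p + q) mod n)))"
  proof (intro sum.cong refl)
    fix p q
    have m: "(p + q) mod n \<in> {..<n}" using n by simp
    have "(\<Sum>j<n. complex_of_real (if (p + q) mod n = j then x p * y q else 0) * om n ^ (k * j)) =
      (\<Sum>j<n. if (p + q) mod n = j then complex_of_real (x p * y q) * om n ^ (k * j) else 0)"
      by (intro sum.cong refl) simp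
    also have "\<dots> = complex_of_real (x p * y q) * om n ^ (k * ((p + q) mod n))"
      by (simp only: sum.delta' finite_lessThan m if_True)
    finally show "(\<Sum>j<n. complex_of_real (if (p + q) mod n = j then x p * y q else 0) * om n ^ (k * j)) =
      complex_of_real (x p * y q) * om n ^ (k * ((p + q) mod n))" .
  qed
  also have "\<dots> = (\<Sum>p<n. \<Sum>q<n. (complex_of_real (x p) * om n ^ (k * p)) * (complex_of_real (y q) * om n ^ (k * q)))"
    by (intro sum.cong refl) (simp add: om_pow_mod[OF n, symmetric] distrib_left power_add)
  also have "\<dots> = chi n x k * chi n y k"
    unfolding chi_def by (simp add: sum_product)
  finally show ?thesis .
qed

lemma chi_one: assumes "n > 0" shows "chi n pc_one k = 1"
proof -
  obtain m where m: "n = Suc m" using assms by (cases n) auto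
  show ?thesis unfolding chi_def pc_one_def m sum.lessThan_Suc_shift by simp
qed

lemma chi_pow: "n > 0 \<Longrightarrow> chi n (pc_pow n u l) k = chi n u k ^ l"
  by (induction l) (simp_all add: chi_one chi_mult)

lemma om_pow: "om n ^ m = cis (2 * pi * real m / real n)"
  unfolding om_def DeMoivre by (simp add: field_simps)

lemma chi_Re: "Re (chi n x k) = v_cos n x k"
  unfolding chi_def v_cos_def om_pow by (simp add: Re_sum mult.assoc)

lemma chi_Im: "Im (chi n x k) = v_sin n x k"
  unfolding chi_def v_sin_def om_pow by (simp add: Im_sum mult.assoc)

lemma chi_rho: "cmod (chi n x k) = v_rho n x k"
  unfolding v_rho_def cmod_def chi_Re chi_Im ..

lemma cis_eq_1_int:
  assumes "cis t = 1" shows "\<exists>m::int. t = m * 2 * pi"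
proof -
  have "cos t = 1" using assms by (metis Re_complex_of_real cis.sel(1) of_real_1)
  then show ?thesis using cos_one_2pi_int by blast
qed

lemma orth:
  assumes n: "n > 0" and p: "p < n" and j: "j < n"
  shows "(\<Sum>k<n. (om n ^ p * cnj (om n ^ j)) ^ k) = (if p = j then of_nat n else 0)"
proof -
  define z where "z = om n ^ p * cnj (om n ^ j)"
  have e: "2 * pi * real p / real n + - (2 * pi * real j / real n) = 2 * pi * (real p - real j) / real n"
    using n by (simp add: field_simps)
  have z: "z = cis (2 * pi * (real p - real j) / real n)"
    unfolding z_def om_pow cis_cnj cis_mult e ..
  show ?thesis
  proof (cases "p = j")
    case True
    then have "z = 1" using z by simp
    then show ?thesis using True by (simp add: z_def)
  next
    case False
    have zn: "z ^ n = 1"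
    proof -
      have nn: "real n \<noteq> 0" using n by simp
      have e2: "real n * (2 * pi * (real p - real j) / real n) = 2 * pi * of_int (int p - int j)"
        using nn by simp
      have "z ^ n = cis (2 * pi * of_int (int p - int j))"
        unfolding z DeMoivre e2 ..
      also have "\<dots> = 1" by (rule cis_multiple_2pi) simp
      finally show ?thesis .
    qed
    have z1: "z \<noteq> 1"
    proof
      assume "z = 1"
      then have "cis (2 * pi * (real p - real j) / real n) = 1" using z by simp
      then obtain m :: int where "2 * pi * (real p - real j) / real n = real_of_int m * 2 * pi"
        using cis_eq_1_int by blast
      then have "2 * pi * (real p - real j) = 2 * pi * (m * real n)" using n by (simp add: field_simps)
      then have "real p - real j = m * real n" by simp
      then have e: "int p - int j = m * int n"
        by (metis of_int_eq_iff of_int_mult of_int_of_nat_eq of_int_diff)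
      have "m \<noteq> 0" using e False by auto
      then have "\<bar>m * int n\<bar> \<ge> int n" using n by (simp add: abs_mult mult_le_cancel_right1 int_one_le_iff_zero_less)
      moreover have "\<bar>int p - int j\<bar> < int n" using p j by simp
      ultimately show False using e by simp
    qed
    show ?thesis using False zn z1 unfolding z_def[symmetric] sum_gp_strict by simp
  qed
qed

lemma inversion:
  assumes n: "n > 0" and j: "j < n"
  shows "complex_of_real (x j) * of_nat n = (\<Sum>k<n. chi n x k * cnj (om n ^ j) ^ k)"
proof -
  have "(\<Sum>k<n. chi n x k * cnj (om n ^ j) ^ k)
     = (\<Sum>k<n. \<Sum>p<n. complex_of_real (x p) * (om n ^ p * cnj (om n ^ j)) ^ k)"
    unfolding chi_def sum_distrib_right
  proof (intro sum.cong refl)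
    fix k p
    have "om n ^ (k * p) = (om n ^ p) ^ k" by (metis mult.commute power_mult)
    then show "complex_of_real (x p) * om n ^ (k * p) * cnj (om n ^ j) ^ k =
      complex_of_real (x p) * (om n ^ p * cnj (om n ^ j)) ^ k"
      by (simp add: power_mult_distrib mult.assoc)
  qed
  also have "\<dots> = (\<Sum>p<n. complex_of_real (x p) * (\<Sum>k<n. (om n ^ p * cnj (om n ^ j)) ^ k))"
    unfolding sum_distrib_left by (rule sum.swap)
  also have "\<dots> = (\<Sum>p<n. complex_of_real (x p) * (if p = j then of_nat n else 0))"
  proof (intro sum.cong refl)
    fix p assume "p \<in> {..<n}"
    then have "p < n" by simp
    then show "complex_of_real (x p) * (\<Sum>k<n. (om n ^ p * cnj (om n ^ j)) ^ k) =
      complex_of_real (x p) * (if p = j then of_nat n else 0)"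
      by (subst orth[OF n _ j]) auto
  qed
  also have "\<dots> = complex_of_real (x j) * of_nat n"
    using j by (simp add: if_distrib sum.delta cong: if_cong)
  finally show ?thesis by simp
qed

lemma om_norm: "cmod (om n ^ m) = 1"
  unfolding om_pow by simp

lemma om_norm1: "cmod (om n) = 1"
  unfolding om_def by simp

lemma inv_bound:
  assumes n: "n > 0" and j: "j < n"
  shows "\<bar>x j\<bar> \<le> (\<Sum>k<n. cmod (chi n x k)) / real n"
proof -
  have "\<bar>x j\<bar> * real n = cmod (complex_of_real (x j) * of_nat n)"
    by (simp add: norm_mult)
  also have "\<dots> = cmod (\<Sum>k<n. chi n x k * cnj (om n ^ j) ^ k)" using inversion[OF n j] by simp
  also have "\<dots> \<le> (\<Sum>k<n. cmod (chi n x k * cnj (om n ^ j) ^ k))" by (rule norm_sum)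
  also have "\<dots> = (\<Sum>k<n. cmod (chi n x k))"
    by (simp add: norm_mult norm_power om_norm1)
  finally show ?thesis using n by (simp add: field_simps)
qed

lemma chi_zero: "chi n x 0 = complex_of_real (v_plus n x)"
  unfolding chi_def v_plus_def by simp

lemma chi_half: assumes "2 * k = n" "n > 0" shows "chi n x k = complex_of_real (v_minus n x)"
proof -
  have "2 * pi * real k / real n = pi" using assms by (auto simp: field_simps)
  then have ok: "om n ^ k = -1" unfolding om_pow by simp
  show ?thesis unfolding chi_def v_minus_def power_mult ok by (simp add: mult.commute)
qed

lemma chi_neg: assumes n: "n > 0" and k: "k \<le> n" shows "chi n x (n - k) = cnj (chi n x k)"
proof -
  have "om n ^ ((n - k) * p) = cnj (om n ^ (k * p))" for p
  proof -
    have "om n ^ ((n - k) * p) * om n ^ (k * p) = om n ^ ((n - k) * p + k * p)" by (simp add: power_add)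
    also have "(n - k) * p + k * p = n * p" using k by (simp add: add_mult_distrib[symmetric])
    also have "om n ^ (n * p) = 1" by (simp add: power_mult om_pow_n[OF n])
    finally have a: "om n ^ ((n - k) * p) * om n ^ (k * p) = 1" .
    have b: "cnj (om n ^ (k * p)) * om n ^ (k * p) = 1"
      by (metis complex_norm_square om_norm of_real_1 power_one mult.commute)
    have "om n ^ (k * p) \<noteq> 0" by (metis om_norm norm_zero zero_neq_one)
    then show ?thesis using a b by (metis mult_right_cancel)
  qed
  then show ?thesis unfolding chi_def by simp
qed

theorem mainTheorem14:
  fixes n :: nat and a :: "nat \<Rightarrow> nat \<Rightarrow> real" and u :: "nat \<Rightarrow> real"
    and c_plus c_minus :: ereal and c :: "nat \<Rightarrow> ereal"
  assumes n2: "n \<ge> 2"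
    and nz_plus: "eventually (\<lambda>l. v_plus n (a l) \<noteq> 0) sequentially"
    and nz_minus: "even n \<Longrightarrow> eventually (\<lambda>l. v_minus n (a l) \<noteq> 0) sequentially"
    and nz_k: "\<And>k. 1 \<le> k \<Longrightarrow> k \<le> (n - 1) div 2 \<Longrightarrow>
               eventually (\<lambda>l. v_rho n (a l) k \<noteq> 0) sequentially"
    and lim_plus: "((\<lambda>l. ereal (\<bar>v_plus n (a l)\<bar> / \<bar>v_plus n (a (Suc l))\<bar>))
                     \<longlongrightarrow> c_plus) sequentially"
    and lim_minus: "even n \<Longrightarrow> ((\<lambda>l. ereal (\<bar>v_minus n (a l)\<bar> / \<bar>v_minus n (a (Suc l))\<bar>))
                     \<longlongrightarrow> c_minus) sequentially"
    and lim_k: "\<And>k. 1 \<le> k \<Longrightarrow> k \<le> (n - 1) div 2 \<Longrightarrow>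
               ((\<lambda>l. ereal (v_rho n (a l) k / v_rho n (a (Suc l)) k)) \<longlongrightarrow> c k) sequentially"
    and u_plus: "ereal \<bar>v_plus n u\<bar> < c_plus"
    and u_minus: "even n \<Longrightarrow> ereal \<bar>v_minus n u\<bar> < c_minus"
    and u_k: "\<And>k. 1 \<le> k \<Longrightarrow> k \<le> (n - 1) div 2 \<Longrightarrow> ereal (v_rho n u k) < c k"
  shows "\<forall>j<n. summable (\<lambda>l. \<bar>pc_mult n (a l) (pc_pow n u l) j\<bar>)"
proof -
  have n0: "n > 0" using n2 by simp
  have S: "summable (\<lambda>l. cmod (chi n (a l) k) * cmod (chi n u k) ^ l)" if k: "k < n" for k
  proof -
    have "k = 0 \<or> (1 \<le> k \<and> k \<le> (n - 1) div 2) \<or> (even n \<and> 2 * k = n)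
      \<or> (1 \<le> n - k \<and> n - k \<le> (n - 1) div 2)"
    proof (cases "even n")
      case True
      then obtain m where m: "n = 2 * m" by blast
      have d: "(n - 1) div 2 = m - 1" using m n0 by (cases m) auto
      show ?thesis unfolding d using m k True by auto
    next
      case False
      then obtain m where m: "n = 2 * m + 1" using oddE by blast
      have d: "(n - 1) div 2 = m" using m by simp
      show ?thesis unfolding d using m k False by auto
    qed
    then consider "k = 0" | "1 \<le> k \<and> k \<le> (n - 1) div 2" | "even n \<and> 2 * k = n"
      | "1 \<le> n - k \<and> n - k \<le> (n - 1) div 2" by blast
    then show ?thesis
    proof cases
      case 1
      then show ?thesis
        using ratio_summ[of "\<lambda>l. \<bar>v_plus n (a l)\<bar>" c_plus "\<bar>v_plus n u\<bar>"] lim_plus u_plus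
        by (simp add: chi_zero)
    next
      case 2
      then show ?thesis
        using ratio_summ[of "\<lambda>l. v_rho n (a l) k" "c k" "v_rho n u k"] lim_k[of k] u_k[of k]
        by (simp add: chi_rho v_rho_def)
    next
      case 3
      then show ?thesis
        using ratio_summ[of "\<lambda>l. \<bar>v_minus n (a l)\<bar>" c_minus "\<bar>v_minus n u\<bar>"] lim_minus u_minus
        by (simp add: chi_half[OF _ n0])
    next
      case 4
      have e: "cmod (chi n x k) = v_rho n x (n - k)" for x
        using chi_neg[OF n0, of k x] k by (simp add: chi_rho[symmetric])
      show ?thesis
        using ratio_summ[of "\<lambda>l. v_rho n (a l) (n - k)" "c (n - k)" "v_rho n u (n - k)"]
          lim_k[of "n - k"] u_k[of "n - k"] 4
        by (simp add: e v_rho_def)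
    qed
  qed
  show ?thesis
  proof (intro allI impI)
    fix j assume j: "j < n"
    let ?g = "\<lambda>l. (\<Sum>k<n. cmod (chi n (a l) k) * cmod (chi n u k) ^ l) / real n"
    have g: "summable ?g"
      by (intro summable_divide summable_sum S) simp
    show "summable (\<lambda>l. \<bar>pc_mult n (a l) (pc_pow n u l) j\<bar>)"
    proof (rule summable_comparison_test'[OF g])
      fix l
      have "norm \<bar>pc_mult n (a l) (pc_pow n u l) j\<bar> \<le> (\<Sum>k<n. cmod (chi n (pc_mult n (a l) (pc_pow n u l)) k)) / real n"
        using inv_bound[OF n0 j] by simp
      also have "\<dots> = ?g l"
        by (simp add: chi_mult[OF n0] chi_pow[OF n0] norm_mult norm_power)
      finally show "norm \<bar>pc_mult n (a l) (pc_pow n u l) j\<bar> \<le> ?g l" .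
    qed
  qed
qed

end
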